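(* Fix $t>0$ and $\beta>0$. Let $(\beta_n)_{n\ge1}$ be a sequence of subprobability measures on $\mathbb{R}^d$ that totally disintegrates, i.e. for every $r>0$, $\sup_{x\in\mathbb{R}^d}\beta_n(B_r(x))\to0$ as $n\to\infty$. Then $$\lim_{n\to\infty}\mathbf E\Big[\big(\mathscr F_t(\beta_n)-\mathbf E[\mathscr F_t(\beta_n)]\big)^2\Big]=0.$$
   Context: $d\ge1$; $\mathbb{P}_z$, $\mathbb{E}_z$ law/expectation of Brownian motion $W$ in $\mathbb{R}^d$ started at $z$; $\dot B$ a Gaussian space-time white noise independent of $W$ on $(\mathcal E,\mathcal F,\mathbf P)$ with expectation $\mathbf E$; $\phi\ge0$ smooth, spherically symmetric, supported in $B_{1/2}(0)$, $\int\phi=1$; $\mathscr H_t(W)=\int_0^t\int_{\mathbb{R}^d}\phi(W_s-y)\dot B(s,y)\,\mathrm{d}y\,\mathrm{d}s$. For a subprobability measure $\alpha$ on $\mathbb{R}^d$, $\mathscr F_t(\alpha)=\int_{\mathbb{R}^d}\alpha(\mathrm{d}z)\,\mathbb{E}_z\big[e^{\beta\mathscr H_t(W)}\big]$. *)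

theory Defs
  imports "HOL-Probability.Probability"
begin

text \<open>C-infinity smoothness on a Euclidean space: there is a family F of iterated partial
derivatives (indexed by finite lists of basis directions) with F [] = f, each F l
being (Frechet) differentiable everywhere with partial derivatives F (b # l).\<close>
definition smooth_fun :: "('a::euclidean_space \<Rightarrow> real) \<Rightarrow> bool" where
  "smooth_fun f \<longleftrightarrow> (\<exists>F :: 'a list \<Rightarrow> 'a \<Rightarrow> real. F [] = f \<and>
      (\<forall>l x. (F l has_derivative (\<lambda>h. \<Sum>b\<in>Basis. (h \<bullet> b) * F (b # l) x)) (at x)))"

definition mollifier :: "('a::euclidean_space \<Rightarrow> real) \<Rightarrow> bool" where
  "mollifier \<phi> \<longleftrightarrow> smooth_fun \<phi> \<and> (\<forall>x. 0 \<le> \<phi> x) \<and>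
     (\<forall>x y. norm x = norm y \<longrightarrow> \<phi> x = \<phi> y) \<and>
     closure {x. \<phi> x \<noteq> 0} \<subseteq> ball 0 (1/2) \<and>
     integrable lborel \<phi> \<and> integral\<^sup>L lborel \<phi> = 1"

definition brownian_motion :: "'w measure \<Rightarrow> ('w \<Rightarrow> real \<Rightarrow> 'd::euclidean_space) \<Rightarrow> bool" where
  "brownian_motion M W \<longleftrightarrow> prob_space M \<and>
     (\<forall>s. (\<lambda>w. W w s) \<in> borel_measurable M) \<and>
     (\<forall>w. W w 0 = 0 \<and> continuous_on {0..} (W w)) \<and>
     (\<forall>(ts :: nat \<Rightarrow> real) n. 0 \<le> ts 0 \<and> strict_mono ts \<longrightarrow>
        prob_space.indep_vars M (\<lambda>_. borel)
          (\<lambda>(i, b) w. (W w (ts (Suc i)) - W w (ts i)) \<bullet> b) ({..<n} \<times> Basis) \<and>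
        (\<forall>i b. b \<in> Basis \<longrightarrow> distributed M lborel (\<lambda>w. (W w (ts (Suc i)) - W w (ts i)) \<bullet> b)
                 (normal_density 0 (sqrt (ts (Suc i) - ts i)))))"

text \<open>Gaussian space-time white noise on R x R^d, realised as an isonormal Gaussian process
indexed by square-integrable functions: B f is centred Gaussian with variance the squared
L2 norm of f (degenerate at 0 if the norm vanishes), and B is a.s. linear.\<close>
definition square_int :: "(real \<times> 'd::euclidean_space \<Rightarrow> real) \<Rightarrow> bool" where
  "square_int f \<longleftrightarrow> f \<in> borel_measurable lborel \<and> integrable lborel (\<lambda>x. (f x)\<^sup>2)"

definition white_noise :: "'e measure \<Rightarrow> ((real \<times> 'd::euclidean_space \<Rightarrow> real) \<Rightarrow> 'e \<Rightarrow> real) \<Rightarrow> bool" where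
  "white_noise P B \<longleftrightarrow> prob_space P \<and>
     (\<forall>f. square_int f \<longrightarrow> B f \<in> borel_measurable P \<and>
        (if (\<integral>x. (f x)\<^sup>2 \<partial>lborel) = 0 then (AE \<omega> in P. B f \<omega> = 0)
         else distributed P lborel (B f) (normal_density 0 (sqrt (\<integral>x. (f x)\<^sup>2 \<partial>lborel))))) \<and>
     (\<forall>f g. square_int f \<longrightarrow> square_int g \<longrightarrow>
        (AE \<omega> in P. B (\<lambda>x. f x + g x) \<omega> = B f \<omega> + B g \<omega>)) \<and>
     (\<forall>f c. square_int f \<longrightarrow> (AE \<omega> in P. B (\<lambda>x. c * f x) \<omega> = c * B f \<omega>))"

definition H_integrand :: "('a::euclidean_space \<Rightarrow> real) \<Rightarrow> real \<Rightarrow> (real \<Rightarrow> 'a) \<Rightarrow> real \<times> 'a \<Rightarrow> real" where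
  "H_integrand \<phi> t p = (\<lambda>(s, y). indicator {0..t} s * \<phi> (p s - y))"

text \<open>A jointly measurable version H of (omega, z, w) \<mapsto> H_t(z + W(w))(omega):
for every starting point z and every Brownian sample w, H(., z, w) coincides a.s. with
the white-noise integral of the integrand along the path z + W(w).\<close>
definition H_version :: "'e measure \<Rightarrow> ((real \<times> 'd \<Rightarrow> real) \<Rightarrow> 'e \<Rightarrow> real) \<Rightarrow> 'w measure \<Rightarrow>
     ('w \<Rightarrow> real \<Rightarrow> 'd::euclidean_space) \<Rightarrow> ('d \<Rightarrow> real) \<Rightarrow> real \<Rightarrow> ('e \<Rightarrow> 'd \<Rightarrow> 'w \<Rightarrow> real) \<Rightarrow> bool" where
  "H_version P B M W \<phi> t H \<longleftrightarrow>
     (\<lambda>(\<omega>, z, w). H \<omega> z w) \<in> borel_measurable (P \<Otimes>\<^sub>M (borel \<Otimes>\<^sub>M M)) \<and>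
     (\<forall>z w. AE \<omega> in P. H \<omega> z w = B (H_integrand \<phi> t (\<lambda>s. z + W w s)) \<omega>)"

definition F_t :: "'w measure \<Rightarrow> ('e \<Rightarrow> 'd \<Rightarrow> 'w \<Rightarrow> real) \<Rightarrow> real \<Rightarrow> 'd measure \<Rightarrow> 'e \<Rightarrow> real" where
  "F_t M H \<beta> \<alpha> \<omega> = (\<integral>z. (\<integral>w. exp (\<beta> * H \<omega> z w) \<partial>M) \<partial>\<alpha>)"

definition subprob_on :: "'d::euclidean_space measure \<Rightarrow> bool" where
  "subprob_on \<alpha> \<longleftrightarrow> sets \<alpha> = sets borel \<and> subprob_space \<alpha>"

definition totally_disintegrates :: "(nat \<Rightarrow> 'd::euclidean_space measure) \<Rightarrow> bool" where
  "totally_disintegrates \<alpha> \<longleftrightarrow>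
     (\<forall>r>0. (\<lambda>n. SUP x. measure (\<alpha> n) (ball x r)) \<longlonglongrightarrow> 0)"

end

theory Submission
  imports Defs
begin


lemma normal_exp_shift:
  assumes "\<sigma> > 0"
  shows "normal_density 0 \<sigma> x * exp (c * x) = exp (c\<^sup>2 * \<sigma>\<^sup>2 / 2) * normal_density (c * \<sigma>\<^sup>2) \<sigma> x"
proof -
  have "-(x - 0)\<^sup>2 / (2 * \<sigma>\<^sup>2) + c * x = c\<^sup>2 * \<sigma>\<^sup>2 / 2 + (-(x - c * \<sigma>\<^sup>2)\<^sup>2 / (2 * \<sigma>\<^sup>2))"
    using assms by (simp add: field_simps power2_eq_square)
  then have "exp (-(x - 0)\<^sup>2 / (2 * \<sigma>\<^sup>2)) * exp (c * x) = exp (c\<^sup>2 * \<sigma>\<^sup>2 / 2) * exp (-(x - c * \<sigma>\<^sup>2)\<^sup>2 / (2 * \<sigma>\<^sup>2))"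
    by (metis exp_add)
  then show ?thesis unfolding normal_density_def by (simp add: field_simps)
qed

lemma normal_mgf:
  assumes "\<sigma> > 0" and d: "distributed P lborel X (normal_density 0 \<sigma>)"
  shows "(\<integral>\<^sup>+\<omega>. ennreal (exp (c * X \<omega>)) \<partial>P) = ennreal (exp (c\<^sup>2 * \<sigma>\<^sup>2 / 2))"
proof -
  have "(\<integral>\<^sup>+\<omega>. ennreal (exp (c * X \<omega>)) \<partial>P) = (\<integral>\<^sup>+x. ennreal (normal_density 0 \<sigma> x) * ennreal (exp (c * x)) \<partial>lborel)"
    by (rule distributed_nn_integral[OF d, symmetric]) simp
  also have "\<dots> = (\<integral>\<^sup>+x. ennreal (exp (c\<^sup>2 * \<sigma>\<^sup>2 / 2)) * ennreal (normal_density (c * \<sigma>\<^sup>2) \<sigma> x) \<partial>lborel)"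
    by (intro nn_integral_cong) (simp add: ennreal_mult'[symmetric] normal_exp_shift[OF assms(1)])
  also have "\<dots> = ennreal (exp (c\<^sup>2 * \<sigma>\<^sup>2 / 2)) * (\<integral>\<^sup>+x. ennreal (normal_density (c * \<sigma>\<^sup>2) \<sigma> x) \<partial>lborel)"
    by (simp add: nn_integral_cmult)
  also have "(\<integral>\<^sup>+x. ennreal (normal_density (c * \<sigma>\<^sup>2) \<sigma> x) \<partial>lborel) = 1"
    using integrable_normal_density[OF assms(1), of "c * \<sigma>\<^sup>2"] integral_normal_density[OF assms(1), of "c * \<sigma>\<^sup>2"]
    by (subst nn_integral_eq_integral) auto
  finally show ?thesis by simp
qed

lemma wn_mgf:
  assumes wn: "white_noise P B" and f: "square_int f"
  shows "(\<integral>\<^sup>+\<omega>. ennreal (exp (c * B f \<omega>)) \<partial>P) = ennreal (exp (c\<^sup>2 * (\<integral>x. (f x)\<^sup>2 \<partial>lborel) / 2))"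
proof -
  interpret prob_space P using wn unfolding white_noise_def by auto
  have v0: "0 \<le> (\<integral>x. (f x)\<^sup>2 \<partial>lborel)" by simp
  show ?thesis
  proof (cases "(\<integral>x. (f x)\<^sup>2 \<partial>lborel) = 0")
    case True
    then have "AE \<omega> in P. B f \<omega> = 0" using wn f unfolding white_noise_def by auto
    then have "(\<integral>\<^sup>+\<omega>. ennreal (exp (c * B f \<omega>)) \<partial>P) = (\<integral>\<^sup>+\<omega>. 1 \<partial>P)"
      by (intro nn_integral_cong_AE) auto
    then show ?thesis using True by (simp add: emeasure_space_1)
  next
    case False
    then have d: "distributed P lborel (B f) (normal_density 0 (sqrt (\<integral>x. (f x)\<^sup>2 \<partial>lborel)))"
      using wn f unfolding white_noise_def by auto
    have pos: "sqrt (\<integral>x. (f x)\<^sup>2 \<partial>lborel) > 0" using False v0 by (simp add: order_neq_le_trans)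
    show ?thesis using normal_mgf[OF pos d, of c] v0 by simp
  qed
qed



lemma moll_parts:
  assumes "mollifier \<phi>"
  shows "smooth_fun \<phi>" "\<forall>x. 0 \<le> \<phi> x" "\<forall>x y. norm x = norm y \<longrightarrow> \<phi> x = \<phi> y"
    "closure {x. \<phi> x \<noteq> 0} \<subseteq> ball 0 (1/2)" "integrable lborel \<phi>" "integral\<^sup>L lborel \<phi> = 1"
proof -
  note h = assms[unfolded mollifier_def]
  show "smooth_fun \<phi>" using h by (rule conjunct1)
  show "\<forall>x. 0 \<le> \<phi> x" using h[THEN conjunct2] by (rule conjunct1)
  show "\<forall>x y. norm x = norm y \<longrightarrow> \<phi> x = \<phi> y" using h[THEN conjunct2, THEN conjunct2] by (rule conjunct1)
  show "closure {x. \<phi> x \<noteq> 0} \<subseteq> ball 0 (1/2)" using h[THEN conjunct2, THEN conjunct2, THEN conjunct2] by (rule conjunct1)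
  show "integrable lborel \<phi>" using h[THEN conjunct2, THEN conjunct2, THEN conjunct2, THEN conjunct2] by (rule conjunct1)
  show "integral\<^sup>L lborel \<phi> = 1" using h[THEN conjunct2, THEN conjunct2, THEN conjunct2, THEN conjunct2] by (rule conjunct2)
qed

lemma moll_supp:
  assumes "mollifier \<phi>" "\<phi> x \<noteq> 0" shows "norm x < 1/2"
proof -
  have "x \<in> {x. \<phi> x \<noteq> 0}" using assms(2) by simp
  then have "x \<in> closure {x. \<phi> x \<noteq> 0}" using closure_subset by (rule subsetD[rotated])
  then have "x \<in> ball 0 (1/2)" using moll_parts(4)[OF assms(1)] by (rule subsetD[rotated])
  then show ?thesis by (simp only: mem_ball_0)
qed

lemma moll_nonneg: "mollifier \<phi> \<Longrightarrow> 0 \<le> \<phi> x"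
  using moll_parts(2) by blast

lemma moll_sym: assumes "mollifier \<phi>" shows "\<phi> (- x) = \<phi> x"
  using moll_parts(3)[OF assms] norm_minus_cancel by blast
lemma moll_cont:
  assumes "mollifier \<phi>" shows "continuous_on UNIV \<phi>"
proof -
  obtain F where F: "F [] = \<phi>" "\<And>l x. (F l has_derivative (\<lambda>h. \<Sum>b\<in>Basis. (h \<bullet> b) * F (b # l) x)) (at x)"
    using moll_parts(1)[OF assms] unfolding smooth_fun_def by blast
  have "\<And>x. isCont \<phi> x"
  proof -
    fix x show "isCont \<phi> x" using has_derivative_continuous[OF F(2)[of "[]" x]] F(1) by simp
  qed
  then show ?thesis by (simp add: continuous_at_imp_continuous_on)
qed

lemma moll_bdd:
  assumes "mollifier \<phi>" obtains C where "\<And>x. \<phi> x \<le> C" "0 \<le> C"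
proof -
  have "compact (\<phi> ` cball 0 (1/2))"
    by (rule compact_continuous_image[OF continuous_on_subset[OF moll_cont[OF assms] subset_UNIV] compact_cball])
  then have "bounded (\<phi> ` cball 0 (1/2))" by (rule compact_imp_bounded)
  then obtain C where C0: "\<forall>y\<in>\<phi> ` cball 0 (1/2). norm y \<le> C" unfolding bounded_iff by blast
  have C: "norm (\<phi> x) \<le> C" if "x \<in> cball 0 (1/2)" for x using C0 that by blast
  have "\<phi> x \<le> max C 0" for x
  proof (cases "\<phi> x = 0")
    case False
    then have "norm x < 1/2" by (rule moll_supp[OF assms])
    then have "x \<in> cball 0 (1/2)" by (simp only: mem_cball_0 less_imp_le)
    then have "\<phi> x \<le> C" using C[of x] by simp
    then show ?thesis by simp
  qed auto
  then show ?thesis using that[of "max C 0"] by auto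
qed

lemma moll_meas: "mollifier \<phi> \<Longrightarrow> \<phi> \<in> borel_measurable borel"
  using moll_cont borel_measurable_continuous_onI by blast

lemma moll_sq_int:
  assumes "mollifier \<phi>" shows "integrable lborel (\<lambda>x. (\<phi> x)\<^sup>2)"
proof -
  obtain C where C: "\<And>x. \<phi> x \<le> C" "0 \<le> C" using moll_bdd[OF assms] by blast
  have i: "integrable lborel (\<lambda>x. C * \<phi> x)" using moll_parts(5)[OF assms] by (rule integrable_mult_right)
  show ?thesis
  proof (rule Bochner_Integration.integrable_bound[OF i])
    show "(\<lambda>x. (\<phi> x)\<^sup>2) \<in> borel_measurable lborel" using moll_meas[OF assms] by simp
    show "AE x in lborel. norm ((\<phi> x)\<^sup>2) \<le> norm (C * \<phi> x)"
      using C moll_nonneg[OF assms] by (auto simp: power2_eq_square intro!: mult_right_mono)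
  qed
qed

lemma moll_sq_shift:
  assumes "mollifier \<phi>"
  shows "(\<integral>\<^sup>+y. ennreal ((\<phi> (a - y))\<^sup>2) \<partial>lborel) = ennreal (\<integral>y. (\<phi> y)\<^sup>2 \<partial>lborel)"
proof -
  have "(\<integral>\<^sup>+y. ennreal ((\<phi> (a - y))\<^sup>2) \<partial>lborel) = (\<integral>\<^sup>+y. ennreal ((\<phi> (-a + y))\<^sup>2) \<partial>lborel)"
    using moll_sym[OF assms, of "y - a" for y] by (intro nn_integral_cong) (simp add: algebra_simps)
  also have "\<dots> = (\<integral>\<^sup>+y. ennreal ((\<phi> y)\<^sup>2) \<partial>distr lborel borel ((+) (-a)))"
    using moll_meas[OF assms] by (subst nn_integral_distr) auto
  also have "\<dots> = (\<integral>\<^sup>+y. ennreal ((\<phi> y)\<^sup>2) \<partial>lborel)" by (simp add: lborel_distr_plus)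
  also have "\<dots> = ennreal (\<integral>y. (\<phi> y)\<^sup>2 \<partial>lborel)"
    using moll_sq_int[OF assms] by (intro nn_integral_eq_integral) auto
  finally show ?thesis .
qed



lemma integrand_alt:
  assumes "continuous_on {0..} p"
  defines "q \<equiv> \<lambda>s. p (max 0 s)"
  shows "continuous_on UNIV q" "H_integrand \<phi> t p = (\<lambda>x. indicator {0..t} (fst x) * \<phi> (q (fst x) - snd x))"
proof -
  have "continuous_on UNIV (\<lambda>s::real. max 0 s)" by (intro continuous_intros)
  moreover have "(\<lambda>s::real. max 0 s) ` UNIV \<subseteq> {0..}" by auto
  ultimately show "continuous_on UNIV q" unfolding q_def
    by (rule continuous_on_compose2[OF assms(1)])
  show "H_integrand \<phi> t p = (\<lambda>x. indicator {0..t} (fst x) * \<phi> (q (fst x) - snd x))"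
    unfolding H_integrand_def q_def by (auto simp: fun_eq_iff indicator_def max_def)
qed

lemma integrand_meas:
  assumes "mollifier \<phi>" "continuous_on {0..} p"
  shows "H_integrand \<phi> t p \<in> borel_measurable borel"
proof -
  define q where "q = (\<lambda>s. p (max 0 s))"
  have q: "continuous_on UNIV q" and e: "H_integrand \<phi> t p = (\<lambda>x. indicator {0..t} (fst x) * \<phi> (q (fst x) - snd x))"
    using integrand_alt[OF assms(2)] unfolding q_def by auto
  have c: "continuous_on UNIV (\<lambda>x::real \<times> 'a. \<phi> (q (fst x) - snd x))"
    by (intro continuous_on_compose2[OF moll_cont[OF assms(1)]] continuous_intros continuous_on_compose2[OF q]) auto
  have "closed ({0..t} \<times> (UNIV :: 'a set))" by (intro closed_Times) auto
  then have "{0..t} \<times> (UNIV :: 'a set) \<in> sets borel" by (rule borel_closed)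
  then have i: "(\<lambda>x::real \<times> 'a. indicator ({0..t} \<times> UNIV) x :: real) \<in> borel_measurable borel"
    by (rule borel_measurable_indicator)
  have "(\<lambda>x::real \<times> 'a. indicator {0..t} (fst x) :: real) = (\<lambda>x. indicator ({0..t} \<times> UNIV) x)"
    by (auto simp: fun_eq_iff indicator_def)
  with i show ?thesis unfolding e
    by (intro borel_measurable_times borel_measurable_continuous_onI[OF c]) simp_all
qed

lemma integrand_nn:
  assumes "mollifier \<phi>" "continuous_on {0..} p" "0 \<le> t"
  shows "(\<integral>\<^sup>+x. ennreal ((H_integrand \<phi> t p x)\<^sup>2) \<partial>lborel) = ennreal (t * (\<integral>y. (\<phi> y)\<^sup>2 \<partial>lborel))"
proof -
  define Q where "Q = (\<integral>y. (\<phi> y)\<^sup>2 \<partial>lborel)"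
  have Q0: "0 \<le> Q" unfolding Q_def by simp
  have m: "(\<lambda>x. ennreal ((H_integrand \<phi> t p x)\<^sup>2)) \<in> borel_measurable (lborel \<Otimes>\<^sub>M lborel)"
    using integrand_meas[OF assms(1,2), of t] by (simp add: lborel_prod)
  have "(\<integral>\<^sup>+x. ennreal ((H_integrand \<phi> t p x)\<^sup>2) \<partial>lborel) =
        (\<integral>\<^sup>+x. ennreal ((H_integrand \<phi> t p x)\<^sup>2) \<partial>(lborel \<Otimes>\<^sub>M lborel))"
    by (simp add: lborel_prod)
  also have "\<dots> = (\<integral>\<^sup>+s. \<integral>\<^sup>+y. ennreal ((H_integrand \<phi> t p (s, y))\<^sup>2) \<partial>lborel \<partial>lborel)"
    by (rule lborel.nn_integral_fst[OF m, symmetric])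
  also have "\<dots> = (\<integral>\<^sup>+s. ennreal Q * indicator {0..t} s \<partial>lborel)"
  proof (intro nn_integral_cong)
    fix s :: real
    show "(\<integral>\<^sup>+y. ennreal ((H_integrand \<phi> t p (s, y))\<^sup>2) \<partial>lborel) = ennreal Q * indicator {0..t} s"
    proof (cases "s \<in> {0..t}")
      case True
      then have "(\<integral>\<^sup>+y. ennreal ((H_integrand \<phi> t p (s, y))\<^sup>2) \<partial>lborel) = (\<integral>\<^sup>+y. ennreal ((\<phi> (p s - y))\<^sup>2) \<partial>lborel)"
        unfolding H_integrand_def by (intro nn_integral_cong) simp
      also have "\<dots> = ennreal Q" unfolding Q_def by (rule moll_sq_shift[OF assms(1)])
      finally show ?thesis using True by simp
    next
      case False
      then show ?thesis unfolding H_integrand_def by simp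
    qed
  qed
  also have "\<dots> = ennreal Q * emeasure lborel {0..t}"
    by (simp add: nn_integral_cmult_indicator)
  also have "\<dots> = ennreal (t * Q)" using assms(3) Q0 by (simp add: ennreal_mult' mult.commute)
  finally show ?thesis unfolding Q_def .
qed

lemma integrand_sq:
  assumes "mollifier \<phi>" "continuous_on {0..} p" "0 \<le> t"
  shows "square_int (H_integrand \<phi> t p)"
    "(\<integral>x. (H_integrand \<phi> t p x)\<^sup>2 \<partial>lborel) = t * (\<integral>y. (\<phi> y)\<^sup>2 \<partial>lborel)"
proof -
  have m: "H_integrand \<phi> t p \<in> borel_measurable lborel" using integrand_meas[OF assms(1,2)] by simp
  have m2: "(\<lambda>x. (H_integrand \<phi> t p x)\<^sup>2) \<in> borel_measurable lborel" using m by measurable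
  show "square_int (H_integrand \<phi> t p)" unfolding square_int_def
    using m integrableI_nonneg[OF m2] integrand_nn[OF assms] by simp
  have "(\<integral>x. (H_integrand \<phi> t p x)\<^sup>2 \<partial>lborel) = enn2real (ennreal (t * (\<integral>y. (\<phi> y)\<^sup>2 \<partial>lborel)))"
    by (subst integral_eq_nn_integral[OF m2]) (auto simp: integrand_nn[OF assms])
  then show "(\<integral>x. (H_integrand \<phi> t p x)\<^sup>2 \<partial>lborel) = t * (\<integral>y. (\<phi> y)\<^sup>2 \<partial>lborel)"
    using assms(3) by simp
qed



lemma sqint_meas: "square_int f \<Longrightarrow> f \<in> borel_measurable lborel"
  unfolding square_int_def by simp
lemma sqint_int: "square_int f \<Longrightarrow> integrable lborel (\<lambda>x. (f x)\<^sup>2)"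
  unfolding square_int_def by simp

lemma sqint_add:
  assumes f: "square_int f" and g: "square_int g"
  shows "square_int (\<lambda>x. f x + g x)"
proof -
  have m: "(\<lambda>x. f x + g x) \<in> borel_measurable lborel" using sqint_meas[OF f] sqint_meas[OF g] by simp
  have i: "integrable lborel (\<lambda>x. 2 * (f x)\<^sup>2 + 2 * (g x)\<^sup>2)" using sqint_int[OF f] sqint_int[OF g] by simp
  have "integrable lborel (\<lambda>x. (f x + g x)\<^sup>2)"
  proof (rule Bochner_Integration.integrable_bound[OF i])
    show "(\<lambda>x. (f x + g x)\<^sup>2) \<in> borel_measurable lborel" using m by simp
    have "(a + b)\<^sup>2 \<le> 2 * a\<^sup>2 + 2 * b\<^sup>2" for a b :: real
      using sum_squares_ge_zero[of "a - b" 0] by (simp add: power2_eq_square algebra_simps)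
    then show "AE x in lborel. norm ((f x + g x)\<^sup>2) \<le> norm (2 * (f x)\<^sup>2 + 2 * (g x)\<^sup>2)" by simp
  qed
  then show ?thesis using m unfolding square_int_def by simp
qed

lemma sq_le: "(a + b)\<^sup>2 \<le> 2 * a\<^sup>2 + 2 * (b::real)\<^sup>2"
  using sum_squares_ge_zero[of "a - b" 0] by (simp add: power2_eq_square algebra_simps)

lemma N_add_le:
  assumes f: "square_int f" and g: "square_int g"
  shows "(\<integral>x. (f x + g x)\<^sup>2 \<partial>lborel) \<le> 2 * (\<integral>x. (f x)\<^sup>2 \<partial>lborel) + 2 * (\<integral>x. (g x)\<^sup>2 \<partial>lborel)"
proof -
  have "(\<integral>x. (f x + g x)\<^sup>2 \<partial>lborel) \<le> (\<integral>x. 2 * (f x)\<^sup>2 + 2 * (g x)\<^sup>2 \<partial>lborel)"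
    using sqint_int[OF sqint_add[OF f g]] sqint_int[OF f] sqint_int[OF g] sq_le
    by (intro integral_mono) auto
  also have "\<dots> = 2 * (\<integral>x. (f x)\<^sup>2 \<partial>lborel) + 2 * (\<integral>x. (g x)\<^sup>2 \<partial>lborel)"
    using sqint_int[OF f] sqint_int[OF g] by simp
  finally show ?thesis .
qed

lemma N_add_ge:
  assumes f: "square_int f" and g: "square_int g" and nn: "\<And>x. 0 \<le> f x * g x"
  shows "(\<integral>x. (f x)\<^sup>2 \<partial>lborel) + (\<integral>x. (g x)\<^sup>2 \<partial>lborel) \<le> (\<integral>x. (f x + g x)\<^sup>2 \<partial>lborel)"
proof -
  have "(\<integral>x. (f x)\<^sup>2 \<partial>lborel) + (\<integral>x. (g x)\<^sup>2 \<partial>lborel) = (\<integral>x. (f x)\<^sup>2 + (g x)\<^sup>2 \<partial>lborel)"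
    using sqint_int[OF f] sqint_int[OF g] by simp
  also have "\<dots> \<le> (\<integral>x. (f x + g x)\<^sup>2 \<partial>lborel)"
    using sqint_int[OF sqint_add[OF f g]] sqint_int[OF f] sqint_int[OF g] nn
    by (intro integral_mono) (auto simp: power2_eq_square algebra_simps)
  finally show ?thesis .
qed

lemma N_add_eq:
  assumes f: "square_int f" and g: "square_int g" and z: "\<And>x. f x * g x = 0"
  shows "(\<integral>x. (f x + g x)\<^sup>2 \<partial>lborel) = (\<integral>x. (f x)\<^sup>2 \<partial>lborel) + (\<integral>x. (g x)\<^sup>2 \<partial>lborel)"
proof -
  have "(\<integral>x. (f x + g x)\<^sup>2 \<partial>lborel) = (\<integral>x. (f x)\<^sup>2 + (g x)\<^sup>2 \<partial>lborel)"
    using z by (intro Bochner_Integration.integral_cong) (auto simp: power2_eq_square algebra_simps)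
  also have "\<dots> = (\<integral>x. (f x)\<^sup>2 \<partial>lborel) + (\<integral>x. (g x)\<^sup>2 \<partial>lborel)"
    using sqint_int[OF f] sqint_int[OF g] by simp
  finally show ?thesis .
qed

lemma wn_mgf2:
  assumes wn: "white_noise P B" and f: "square_int f" and g: "square_int g"
  shows "(\<integral>\<^sup>+\<omega>. ennreal (exp (c * B f \<omega>)) * ennreal (exp (c * B g \<omega>)) \<partial>P)
     = ennreal (exp (c\<^sup>2 * (\<integral>x. (f x + g x)\<^sup>2 \<partial>lborel) / 2))"
proof -
  have "AE \<omega> in P. B (\<lambda>x. f x + g x) \<omega> = B f \<omega> + B g \<omega>"
    using wn f g unfolding white_noise_def by blast
  then have "(\<integral>\<^sup>+\<omega>. ennreal (exp (c * B f \<omega>)) * ennreal (exp (c * B g \<omega>)) \<partial>P)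
      = (\<integral>\<^sup>+\<omega>. ennreal (exp (c * B (\<lambda>x. f x + g x) \<omega>)) \<partial>P)"
    by (intro nn_integral_cong_AE) (auto simp: ennreal_mult'[symmetric] exp_add[symmetric] algebra_simps)
  also have "\<dots> = ennreal (exp (c\<^sup>2 * (\<integral>x. (f x + g x)\<^sup>2 \<partial>lborel) / 2))"
    by (rule wn_mgf[OF wn sqint_add[OF f g]])
  finally show ?thesis .
qed

lemma integrand_disjoint:
  assumes "mollifier \<phi>" "\<And>s. s \<in> {0..t} \<Longrightarrow> 1 \<le> norm (p s - p' s)"
  shows "H_integrand \<phi> t p x * H_integrand \<phi> t p' x = 0"
proof (cases x)
  case (Pair s y)
  show ?thesis
  proof (rule ccontr)
    assume ne: "H_integrand \<phi> t p x * H_integrand \<phi> t p' x \<noteq> 0"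
    then have s: "s \<in> {0..t}" and a: "\<phi> (p s - y) \<noteq> 0" and b: "\<phi> (p' s - y) \<noteq> 0"
      unfolding Pair H_integrand_def by (auto split: if_splits simp: indicator_def)
    have "norm (p s - y) < 1/2" by (rule moll_supp[OF assms(1) a])
    moreover have "norm (p' s - y) < 1/2" by (rule moll_supp[OF assms(1) b])
    ultimately have "norm (p s - p' s) < 1" using norm_triangle_lt[of "p s - y" "y - p' s" 1]
      by (simp add: norm_minus_commute[of y])
    then show False using assms(2)[OF s] by simp
  qed
qed

lemma integrand_nonneg:
  assumes "mollifier \<phi>" shows "0 \<le> H_integrand \<phi> t p x * H_integrand \<phi> t p' x"
  using moll_nonneg[OF assms] unfolding H_integrand_def by (auto simp: split_beta)



definition good :: "'w measure \<Rightarrow> ('w \<Rightarrow> real \<Rightarrow> 'd::euclidean_space) \<Rightarrow> real \<Rightarrow> nat \<Rightarrow> 'w set" where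
  "good M W t R = {w \<in> space M. \<forall>q::rat. 0 \<le> real_of_rat q \<and> real_of_rat q \<le> t \<longrightarrow> norm (W w (real_of_rat q)) \<le> real R}"

lemma good_sets:
  assumes m: "\<And>s. (\<lambda>w. W w s) \<in> borel_measurable M"
  shows "good M W t R \<in> sets M"
proof -
  have [measurable]: "(\<lambda>w. W w s) \<in> borel_measurable M" for s by (rule m)
  have "{w \<in> space M. 0 \<le> real_of_rat q \<and> real_of_rat q \<le> t \<longrightarrow> norm (W w (real_of_rat q)) \<le> real R} \<in> sets M" for q
  proof (cases "0 \<le> real_of_rat q \<and> real_of_rat q \<le> t")
    case True
    have "(\<lambda>w. norm (W w (real_of_rat q))) \<in> borel_measurable M" using measurable_comp[OF m borel_measurable_norm] by (simp add: comp_def)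
    then have "{w \<in> space M. norm (W w (real_of_rat q)) \<le> real R} \<in> sets M" by simp
    then show ?thesis using True by simp
  next
    case False then show ?thesis by simp
  qed
  then show ?thesis unfolding good_def by (rule sets.sets_Collect_countable_All)
qed

lemma good_bound:
  assumes c: "continuous_on {0..} (W w)" and g: "w \<in> good M W t R" and s: "s \<in> {0..t}"
  shows "norm (W w s) \<le> real R"
proof (rule ccontr)
  assume "\<not> norm (W w s) \<le> real R"
  then have e: "norm (W w s) - real R > 0" by simp
  have s0: "s \<in> {0..}" using s by simp
  have "continuous (at s within {0..}) (W w)"
    using c s0 unfolding continuous_on_eq_continuous_within by (rule bspec)
  then have "\<forall>e>0. \<exists>d>0. \<forall>x'\<in>{0..}. dist x' s < d \<longrightarrow> dist (W w x') (W w s) < e"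
    unfolding continuous_within_eps_delta .
  then obtain d where d: "d > 0" "\<forall>x'\<in>{0..}. dist x' s < d \<longrightarrow> dist (W w x') (W w s) < norm (W w s) - real R"
    using e by blast
  have "\<exists>r\<in>\<rat>. 0 \<le> r \<and> r \<le> t \<and> dist r s < d"
  proof (cases "s > 0")
    case True
    then have "max 0 (s - d) < s" using d by simp
    then obtain r where "r \<in> \<rat>" "max 0 (s - d) < r" "r < s" using Rats_dense_in_real by blast
    then show ?thesis using s by (intro bexI[of _ r]) (auto simp: dist_real_def)
  next
    case False
    then have s0: "s = 0" using s by simp
    then show ?thesis using s0 s d by (intro bexI[of _ 0]) auto
  qed
  then obtain r where r: "r \<in> \<rat>" "0 \<le> r" "r \<le> t" "dist r s < d" by blast
  then obtain q where q: "r = real_of_rat q" by (auto elim: Rats_cases)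
  have "\<forall>q::rat. 0 \<le> real_of_rat q \<and> real_of_rat q \<le> t \<longrightarrow> norm (W w (real_of_rat q)) \<le> real R"
    using g unfolding good_def by simp
  then have "norm (W w r) \<le> real R" using r unfolding q by simp
  moreover have "dist (W w r) (W w s) < norm (W w s) - real R" using d(2) r by simp
  ultimately show False using norm_triangle_ineq3[of "W w s" "W w r"] by (simp add: dist_norm norm_minus_commute)
qed


lemma good_mono: "R \<le> R' \<Longrightarrow> good M W t R \<subseteq> good M W t R'"
  unfolding good_def by (auto intro: order_trans)

lemma good_ex:
  assumes c: "continuous_on {0..} (W w)" and w: "w \<in> space M"
  shows "\<exists>R. w \<in> good M W t R"
proof -
  have "compact (W w ` {0..max 0 t})"
    by (rule compact_continuous_image[OF continuous_on_subset[OF c] compact_Icc]) auto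
  then have "bounded (W w ` {0..max 0 t})" by (rule compact_imp_bounded)
  then obtain C where C0: "\<forall>y\<in>W w ` {0..max 0 t}. norm y \<le> C" unfolding bounded_iff by blast
  have C: "norm (W w s) \<le> C" if "s \<in> {0..max 0 t}" for s using C0 that by blast
  obtain R :: nat where R: "C \<le> real R" using real_arch_simple by blast
  have "norm (W w (real_of_rat q)) \<le> real R" if "0 \<le> real_of_rat q \<and> real_of_rat q \<le> t" for q
  proof -
    have "real_of_rat q \<in> {0..max 0 t}" using that by (simp only: atLeastAtMost_iff le_max_iff_disj) simp
    then show ?thesis using C[of "real_of_rat q"] R by linarith
  qed
  then have "w \<in> good M W t R"
    unfolding good_def using w by blast
  then show ?thesis by blast
qed

lemma bad_lim:
  assumes "prob_space M" and m: "\<And>s. (\<lambda>w. W w s) \<in> borel_measurable M"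
    and c: "\<And>w. continuous_on {0..} (W w)"
  shows "(\<lambda>R. measure M (space M - good M W t R)) \<longlonglongrightarrow> 0"
proof -
  interpret prob_space M by fact
  have L: "(\<lambda>R. measure M (space M - good M W t R)) \<longlonglongrightarrow> measure M (\<Inter>R. space M - good M W t R)"
  proof (rule Lim_measure_decseq)
    show "range (\<lambda>R. space M - good M W t R) \<subseteq> sets M"
      by (intro image_subsetI sets.Diff sets.top good_sets[OF m])
    show "decseq (\<lambda>R. space M - good M W t R)" unfolding decseq_def
      by (meson Diff_mono good_mono order_refl)
    show "\<And>i. emeasure M (space M - good M W t i) \<noteq> \<infinity>" using emeasure_finite by simp
  qed
  moreover have E: "(\<Inter>R. space M - good M W t R) = {}"
  proof (rule equals0I)
    fix x assume x: "x \<in> (\<Inter>R. space M - good M W t R)"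
    then have "x \<in> space M" by simp
    then obtain R where "x \<in> good M W t R" using good_ex[where W=W and w=x and M=M and t=t, OF c[of x]] by blast
    then show False using x by simp
  qed
  ultimately show ?thesis using L unfolding E by (simp only: measure_empty)
qed



locale setting =
  fixes P :: "'e measure" and M :: "'w measure" and \<alpha> :: "'d::euclidean_space measure"
    and H :: "'e \<Rightarrow> 'd \<Rightarrow> 'w \<Rightarrow> real" and B :: "(real \<times> 'd \<Rightarrow> real) \<Rightarrow> 'e \<Rightarrow> real"
    and W :: "'w \<Rightarrow> real \<Rightarrow> 'd" and \<phi> :: "'d \<Rightarrow> real" and t \<beta> :: real
  assumes Pp: "prob_space P" and Mp: "prob_space M"
    and \<alpha>s: "sets \<alpha> = sets borel" and \<alpha>f: "subprob_space \<alpha>"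
    and Hm0: "(\<lambda>(\<omega>, z, w). H \<omega> z w) \<in> borel_measurable (P \<Otimes>\<^sub>M (borel \<Otimes>\<^sub>M M))"
    and Hv: "\<And>z w. AE \<omega> in P. H \<omega> z w = B (H_integrand \<phi> t (\<lambda>s. z + W w s)) \<omega>"
    and wn: "white_noise P B" and moll: "mollifier \<phi>"
    and Wc: "\<And>w. continuous_on {0..} (W w)" and t0: "0 \<le> t"
    and Wm: "\<And>s. (\<lambda>w. W w s) \<in> borel_measurable M"
begin

interpretation P: prob_space P by (rule Pp)
interpretation M: prob_space M by (rule Mp)
interpretation \<alpha>: subprob_space \<alpha> by (rule \<alpha>f)

abbreviation "S \<equiv> \<alpha> \<Otimes>\<^sub>M M"

lemma S_fin: "finite_measure S"
  by (rule finite_measure_pair_measure) unfold_locales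

interpretation S: finite_measure S by (rule S_fin)
interpretation PS: pair_sigma_finite P S by unfold_locales

definition Hp :: "'e \<times> 'd \<times> 'w \<Rightarrow> real" where
  "Hp x = H (fst x) (fst (snd x)) (snd (snd x))"

lemma Hp_meas[measurable]: "Hp \<in> borel_measurable (P \<Otimes>\<^sub>M S)"
proof -
  have e: "Hp = (\<lambda>(\<omega>, z, w). H \<omega> z w)" unfolding Hp_def by (auto simp: fun_eq_iff split_beta)
  have "sets (P \<Otimes>\<^sub>M S) = sets (P \<Otimes>\<^sub>M (borel \<Otimes>\<^sub>M M))"
    by (intro sets_pair_measure_cong refl \<alpha>s)
  then show ?thesis unfolding e using Hm0 by (simp cong: measurable_cong_sets)
qed

definition Y :: "'e \<times> 'd \<times> 'w \<Rightarrow> ennreal" where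
  "Y x = ennreal (exp (\<beta> * Hp x))"

lemma Y_meas[measurable]: "Y \<in> borel_measurable (P \<Otimes>\<^sub>M S)"
  unfolding Y_def by measurable

definition f :: "'d \<times> 'w \<Rightarrow> real \<times> 'd \<Rightarrow> real" where
  "f u = H_integrand \<phi> t (\<lambda>s. fst u + W (snd u) s)"

definition Q where "Q = (\<integral>y. (\<phi> y)\<^sup>2 \<partial>lborel)"
definition K where "K = t * Q"

lemma path_cont: "continuous_on {0..} (\<lambda>s. z + W w s)"
  by (intro continuous_on_add continuous_on_const Wc)

lemma f_sq: "square_int (f u)" "(\<integral>x. (f u x)\<^sup>2 \<partial>lborel) = K"
  unfolding f_def K_def Q_def using integrand_sq[OF moll path_cont t0] by auto

lemma K_nonneg: "0 \<le> K" unfolding K_def Q_def using t0 by simp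

definition E1 where "E1 = exp (\<beta>\<^sup>2 * K / 2)"

lemma Y_int1: "(\<integral>\<^sup>+\<omega>. Y (\<omega>, u) \<partial>P) = ennreal E1"
proof -
  have "AE \<omega> in P. Y (\<omega>, u) = ennreal (exp (\<beta> * B (f u) \<omega>))"
    using Hv[of "fst u" "snd u"] unfolding Y_def Hp_def f_def by auto
  then have "(\<integral>\<^sup>+\<omega>. Y (\<omega>, u) \<partial>P) = (\<integral>\<^sup>+\<omega>. ennreal (exp (\<beta> * B (f u) \<omega>)) \<partial>P)"
    by (rule nn_integral_cong_AE)
  also have "\<dots> = ennreal E1" unfolding E1_def using wn_mgf[OF wn f_sq(1), of \<beta> u] f_sq(2) by simp
  finally show ?thesis .
qed


definition \<Phi> :: "'e \<Rightarrow> ennreal" where "\<Phi> \<omega> = (\<integral>\<^sup>+u. Y (\<omega>, u) \<partial>S)"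

lemma \<Phi>_meas[measurable]: "\<Phi> \<in> borel_measurable P"
  unfolding \<Phi>_def using S.borel_measurable_nn_integral_fst[OF Y_meas] by simp

abbreviation "\<sigma> \<equiv> emeasure S (space S)"

lemma \<sigma>_le: "\<sigma> \<le> 1"
proof -
  have "\<sigma> = emeasure \<alpha> (space \<alpha>) * emeasure M (space M)"
    unfolding space_pair_measure by (rule M.emeasure_pair_measure_Times) auto
  then show ?thesis using \<alpha>.emeasure_space_le_1 by (simp add: M.emeasure_space_1)
qed

lemma E\<Phi>: "(\<integral>\<^sup>+\<omega>. \<Phi> \<omega> \<partial>P) = ennreal E1 * \<sigma>"
proof -
  have "(\<integral>\<^sup>+\<omega>. \<Phi> \<omega> \<partial>P) = (\<integral>\<^sup>+u. \<integral>\<^sup>+\<omega>. Y (\<omega>, u) \<partial>P \<partial>S)"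
    unfolding \<Phi>_def by (rule PS.Fubini[OF Y_meas, symmetric])
  also have "\<dots> = (\<integral>\<^sup>+u. ennreal E1 \<partial>S)" by (simp add: Y_int1)
  also have "\<dots> = ennreal E1 * \<sigma>" by simp
  finally show ?thesis .
qed

definition c :: "'d \<times> 'w \<Rightarrow> 'd \<times> 'w \<Rightarrow> ennreal" where
  "c u u' = (\<integral>\<^sup>+\<omega>. Y (\<omega>, u) * Y (\<omega>, u') \<partial>P)"

lemma c_eq: "c u u' = ennreal (exp (\<beta>\<^sup>2 * (\<integral>x. (f u x + f u' x)\<^sup>2 \<partial>lborel) / 2))"
proof -
  have "AE \<omega> in P. Y (\<omega>, u) * Y (\<omega>, u') = ennreal (exp (\<beta> * B (f u) \<omega>)) * ennreal (exp (\<beta> * B (f u') \<omega>))"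
    using Hv[of "fst u" "snd u"] Hv[of "fst u'" "snd u'"] unfolding Y_def Hp_def f_def by auto
  then have "c u u' = (\<integral>\<^sup>+\<omega>. ennreal (exp (\<beta> * B (f u) \<omega>)) * ennreal (exp (\<beta> * B (f u') \<omega>)) \<partial>P)"
    unfolding c_def by (rule nn_integral_cong_AE)
  also have "\<dots> = ennreal (exp (\<beta>\<^sup>2 * (\<integral>x. (f u x + f u' x)\<^sup>2 \<partial>lborel) / 2))"
    by (rule wn_mgf2[OF wn f_sq(1) f_sq(1)])
  finally show ?thesis .
qed

lemma E\<Phi>2: "(\<integral>\<^sup>+\<omega>. \<Phi> \<omega> * \<Phi> \<omega> \<partial>P) = (\<integral>\<^sup>+u. \<integral>\<^sup>+u'. c u u' \<partial>S \<partial>S)"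
proof -
  have Y2: "(\<lambda>u. Y (\<omega>, u)) \<in> borel_measurable S" if "\<omega> \<in> space P" for \<omega>
    using measurable_Pair2[OF Y_meas that] .
  have "(\<integral>\<^sup>+\<omega>. \<Phi> \<omega> * \<Phi> \<omega> \<partial>P) = (\<integral>\<^sup>+\<omega>. \<integral>\<^sup>+u. \<integral>\<^sup>+u'. Y (\<omega>, u) * Y (\<omega>, u') \<partial>S \<partial>S \<partial>P)"
  proof (intro nn_integral_cong)
    fix \<omega> assume \<omega>: "\<omega> \<in> space P"
    have "\<Phi> \<omega> * \<Phi> \<omega> = (\<integral>\<^sup>+u. Y (\<omega>, u) * \<Phi> \<omega> \<partial>S)"
      unfolding \<Phi>_def[of \<omega>] by (rule nn_integral_multc[OF Y2[OF \<omega>], symmetric])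
    also have "\<dots> = (\<integral>\<^sup>+u. \<integral>\<^sup>+u'. Y (\<omega>, u) * Y (\<omega>, u') \<partial>S \<partial>S)"
      unfolding \<Phi>_def[of \<omega>] by (intro nn_integral_cong nn_integral_cmult[OF Y2[OF \<omega>], symmetric])
    finally show "\<Phi> \<omega> * \<Phi> \<omega> = (\<integral>\<^sup>+u. \<integral>\<^sup>+u'. Y (\<omega>, u) * Y (\<omega>, u') \<partial>S \<partial>S)" .
  qed
  also have "\<dots> = (\<integral>\<^sup>+u. \<integral>\<^sup>+\<omega>. \<integral>\<^sup>+u'. Y (\<omega>, u) * Y (\<omega>, u') \<partial>S \<partial>P \<partial>S)"
  proof -
    have m: "(\<lambda>x. \<integral>\<^sup>+u'. Y (fst x, snd x) * Y (fst x, u') \<partial>S) \<in> borel_measurable (P \<Otimes>\<^sub>M S)"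
      using S.borel_measurable_nn_integral_fst[of "\<lambda>y. Y (fst (fst y), snd (fst y)) * Y (fst (fst y), snd y)" "P \<Otimes>\<^sub>M S"]
      by measurable
    show ?thesis using PS.Fubini[OF m] by simp
  qed
  also have "\<dots> = (\<integral>\<^sup>+u. \<integral>\<^sup>+u'. c u u' \<partial>S \<partial>S)"
  proof (intro nn_integral_cong)
    fix u assume u: "u \<in> space S"
    have m: "(\<lambda>x. Y (fst x, u) * Y x) \<in> borel_measurable (P \<Otimes>\<^sub>M S)"
      using u by measurable
    show "(\<integral>\<^sup>+\<omega>. \<integral>\<^sup>+u'. Y (\<omega>, u) * Y (\<omega>, u') \<partial>S \<partial>P) = (\<integral>\<^sup>+u'. c u u' \<partial>S)"
      unfolding c_def using PS.Fubini[OF m] by simp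
  qed
  finally show ?thesis .
qed


definition E2 where "E2 = exp (2 * \<beta>\<^sup>2 * K)"

definition Bd :: "nat \<Rightarrow> 'd \<times> 'w \<Rightarrow> 'd \<times> 'w \<Rightarrow> ennreal" where
  "Bd R u u' = (if dist (fst u) (fst u') < 1 + 2 * real R then 1 else 0)
     + (if snd u \<notin> good M W t R then 1 else 0) + (if snd u' \<notin> good M W t R then 1 else 0)"

lemma N_bounds: "2 * K \<le> (\<integral>x. (f u x + f u' x)\<^sup>2 \<partial>lborel)" "(\<integral>x. (f u x + f u' x)\<^sup>2 \<partial>lborel) \<le> 4 * K"
proof -
  show "2 * K \<le> (\<integral>x. (f u x + f u' x)\<^sup>2 \<partial>lborel)"
    using N_add_ge[OF f_sq(1) f_sq(1), of u u'] f_sq(2) integrand_nonneg[OF moll] unfolding f_def by simp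
  show "(\<integral>x. (f u x + f u' x)\<^sup>2 \<partial>lborel) \<le> 4 * K"
    using N_add_le[OF f_sq(1) f_sq(1), of u u'] f_sq(2) by simp
qed

lemma c_bound: "c u u' \<le> ennreal (E1\<^sup>2) + ennreal E2 * Bd R u u'"
proof (cases "Bd R u u' = 0")
  case True
  then have d: "\<not> dist (fst u) (fst u') < 1 + 2 * real R" and g: "snd u \<in> good M W t R" "snd u' \<in> good M W t R"
    unfolding Bd_def by (auto split: if_splits)
  have sep: "1 \<le> norm ((fst u + W (snd u) s) - (fst u' + W (snd u') s))" if s: "s \<in> {0..t}" for s
  proof -
    have a: "norm (W (snd u) s) \<le> real R" by (rule good_bound[OF Wc g(1) s])
    have b: "norm (W (snd u') s) \<le> real R" by (rule good_bound[OF Wc g(2) s])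
    have "norm (fst u - fst u') \<le> norm ((fst u + W (snd u) s) - (fst u' + W (snd u') s)) + norm (W (snd u) s) + norm (W (snd u') s)"
      using norm_triangle_ineq4[of "(fst u + W (snd u) s) - (fst u' + W (snd u') s)" "W (snd u) s - W (snd u') s"]
        norm_triangle_ineq4[of "W (snd u) s" "W (snd u') s"]
      by (simp add: algebra_simps)
    then show ?thesis using d a b by (simp add: dist_norm)
  qed
  have "(\<integral>x. (f u x + f u' x)\<^sup>2 \<partial>lborel) = K + K"
    using N_add_eq[OF f_sq(1) f_sq(1), of u u'] f_sq(2) integrand_disjoint[OF moll sep] unfolding f_def by simp
  then have "c u u' = ennreal (exp (\<beta>\<^sup>2 * K))" unfolding c_eq by (simp add: field_simps)
  also have "exp (\<beta>\<^sup>2 * K) = E1\<^sup>2" unfolding E1_def by (simp add: power2_eq_square exp_add[symmetric])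
  finally show ?thesis by simp
next
  case False
  then have B1: "1 \<le> Bd R u u'" unfolding Bd_def by (auto split: if_splits)
  have "c u u' \<le> ennreal E2" unfolding c_eq E2_def
    using mult_left_mono[OF N_bounds(2)[of u u'], of "\<beta>\<^sup>2"] by (intro ennreal_leI) simp
  also have "\<dots> \<le> ennreal E2 * Bd R u u'" using B1 mult_left_mono[OF B1, of "ennreal E2"] by simp
  also have "\<dots> \<le> ennreal (E1\<^sup>2) + ennreal E2 * Bd R u u'" by simp
  finally show ?thesis .
qed


lemma good_M[measurable]: "good M W t R \<in> sets M"
  by (rule good_sets[OF Wm])

definition sR :: "nat \<Rightarrow> real" where "sR R = (SUP x. measure \<alpha> (ball x (1 + 2 * real R)))"
definition pR :: "nat \<Rightarrow> real" where "pR R = measure M (space M - good M W t R)"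

lemma piece1: "(\<integral>\<^sup>+u'. (if dist a (fst u') < 1 + 2 * real R then 1 else 0) \<partial>S) \<le> ennreal (sR R)"
proof -
  have b: "ball a (1 + 2 * real R) \<in> sets \<alpha>" by (simp add: \<alpha>s)
  have m0: "(\<lambda>z. indicator (ball a (1 + 2 * real R)) z :: ennreal) \<in> borel_measurable \<alpha>"
    using b by (rule borel_measurable_indicator)
  have m: "(\<lambda>u'. indicator (ball a (1 + 2 * real R)) (fst u') :: ennreal) \<in> borel_measurable S"
    using measurable_comp[OF measurable_fst m0] by (simp add: comp_def)
  have "(\<integral>\<^sup>+u'. (if dist a (fst u') < 1 + 2 * real R then 1 else 0) \<partial>S)
      = (\<integral>\<^sup>+u'. indicator (ball a (1 + 2 * real R)) (fst u') \<partial>S)"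
    by (intro nn_integral_cong) (simp add: indicator_def)
  also have "\<dots> = (\<integral>\<^sup>+z. \<integral>\<^sup>+w. indicator (ball a (1 + 2 * real R)) z \<partial>M \<partial>\<alpha>)"
    using M.nn_integral_fst[OF m] by simp
  also have "\<dots> = (\<integral>\<^sup>+z. indicator (ball a (1 + 2 * real R)) z \<partial>\<alpha>)"
    by (intro nn_integral_cong) (simp add: M.emeasure_space_1)
  also have "\<dots> = emeasure \<alpha> (ball a (1 + 2 * real R))"
    by (rule nn_integral_indicator) (simp add: \<alpha>s)
  also have "\<dots> = ennreal (measure \<alpha> (ball a (1 + 2 * real R)))"
    by (simp add: \<alpha>.emeasure_eq_measure)
  also have "\<dots> \<le> ennreal (sR R)" unfolding sR_def
  proof (intro ennreal_leI cSUP_upper2[of _ _ a])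
    show "bdd_above (range (\<lambda>x. measure \<alpha> (ball x (1 + 2 * real R))))"
      using \<alpha>.subprob_measure_le_1 by (intro bdd_aboveI[of _ 1]) auto
  qed auto
  finally show ?thesis .
qed

lemma piece3: "(\<integral>\<^sup>+u'. (if snd u' \<notin> good M W t R then 1 else 0) \<partial>S) \<le> ennreal (pR R)"
proof -
  have "(\<integral>\<^sup>+u'. (if snd u' \<notin> good M W t R then 1 else 0) \<partial>S)
     = (\<integral>\<^sup>+u'. indicator (space \<alpha> \<times> (space M - good M W t R)) u' \<partial>S)"
    by (intro nn_integral_cong) (auto simp: space_pair_measure indicator_def)
  also have "\<dots> = emeasure S (space \<alpha> \<times> (space M - good M W t R))"
    by (rule nn_integral_indicator) simp
  also have "\<dots> = emeasure \<alpha> (space \<alpha>) * emeasure M (space M - good M W t R)"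
    by (rule M.emeasure_pair_measure_Times) auto
  also have "\<dots> \<le> 1 * emeasure M (space M - good M W t R)"
    by (intro mult_right_mono \<alpha>.emeasure_space_le_1) simp
  also have "\<dots> = ennreal (pR R)" unfolding pR_def by (simp add: M.emeasure_eq_measure)
  finally show ?thesis .
qed

lemma piece2: "(\<integral>\<^sup>+u. (if snd u \<notin> good M W t R then 1 else 0) \<partial>S) \<le> ennreal (pR R)"
  by (rule piece3)


lemma m1: "(\<lambda>u'. (if dist a (fst u') < 1 + 2 * real R then 1 else 0) :: ennreal) \<in> borel_measurable S"
proof -
  have b: "ball a (1 + 2 * real R) \<in> sets \<alpha>" by (simp add: \<alpha>s)
  have m0: "(\<lambda>z. indicator (ball a (1 + 2 * real R)) z :: ennreal) \<in> borel_measurable \<alpha>"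
    using b by (rule borel_measurable_indicator)
  have m: "(\<lambda>u'. indicator (ball a (1 + 2 * real R)) (fst u') :: ennreal) \<in> borel_measurable S"
    using measurable_comp[OF measurable_fst m0] by (simp add: comp_def)
  have e: "(\<lambda>u'. (if dist a (fst u') < 1 + 2 * real R then 1 else 0) :: ennreal) = (\<lambda>u'. indicator (ball a (1 + 2 * real R)) (fst u'))"
    by (simp add: fun_eq_iff indicator_def)
  show ?thesis unfolding e by (rule m)
qed

lemma m3: "(\<lambda>u'. (if snd u' \<notin> good M W t R then 1 else 0) :: ennreal) \<in> borel_measurable S"
  by measurable

lemma Bd_meas: "Bd R u \<in> borel_measurable S"
proof -
  have "Bd R u = (\<lambda>u'. (if dist (fst u) (fst u') < 1 + 2 * real R then 1 else 0)
     + (if snd u \<notin> good M W t R then 1 else 0) + (if snd u' \<notin> good M W t R then 1 else 0))"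
    unfolding Bd_def by (simp add: fun_eq_iff)
  then show ?thesis using m1[of "fst u" R] m3[of R] by simp
qed

lemma Bd_int: "(\<integral>\<^sup>+u'. Bd R u u' \<partial>S) \<le> ennreal (sR R) + (if snd u \<notin> good M W t R then 1 else 0) + ennreal (pR R)"
proof -
  let ?A = "\<lambda>u'. (if dist (fst u) (fst u') < 1 + 2 * real R then 1 else 0) :: ennreal"
  let ?k = "(if snd u \<notin> good M W t R then 1 else 0) :: ennreal"
  let ?C = "\<lambda>u'. (if snd u' \<notin> good M W t R then 1 else 0) :: ennreal"
  have "(\<integral>\<^sup>+u'. Bd R u u' \<partial>S) = (\<integral>\<^sup>+u'. (?A u' + ?k) + ?C u' \<partial>S)"
    unfolding Bd_def by simp
  also have "\<dots> = (\<integral>\<^sup>+u'. ?A u' + ?k \<partial>S) + (\<integral>\<^sup>+u'. ?C u' \<partial>S)"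
    using m1[of "fst u" R] m3[of R] by (intro nn_integral_add) auto
  also have "(\<integral>\<^sup>+u'. ?A u' + ?k \<partial>S) = (\<integral>\<^sup>+u'. ?A u' \<partial>S) + (\<integral>\<^sup>+u'. ?k \<partial>S)"
    using m1[of "fst u" R] by (intro nn_integral_add) auto
  also have "(\<integral>\<^sup>+u'. ?k \<partial>S) = ?k * \<sigma>" by simp
  also have "\<dots> \<le> ?k" using mult_left_mono[OF \<sigma>_le, of ?k] by simp
  finally show ?thesis using piece1[of "fst u" R] piece3[of R]
    by (smt (verit) add_mono order_trans add_left_mono add_right_mono)
qed


lemma sR_nonneg: "0 \<le> sR R"
proof -
  have "0 \<le> measure \<alpha> (ball 0 (1 + 2 * real R))" by simp
  also have "\<dots> \<le> sR R" unfolding sR_def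
    using \<alpha>.subprob_measure_le_1 by (intro cSUP_upper bdd_aboveI[of _ 1]) auto
  finally show ?thesis .
qed

lemma pR_nonneg: "0 \<le> pR R" unfolding pR_def by simp

lemma m2: "(\<lambda>u. (if snd u \<notin> good M W t R then 1 else 0) :: ennreal) \<in> borel_measurable S"
  by (rule m3)

lemma E\<Phi>2_bound:
  "(\<integral>\<^sup>+\<omega>. \<Phi> \<omega> * \<Phi> \<omega> \<partial>P) \<le> ennreal (E1\<^sup>2) * \<sigma> * \<sigma> + ennreal E2 * ennreal (sR R + 2 * pR R)"
proof -
  let ?k = "\<lambda>u. (if snd u \<notin> good M W t R then 1 else 0) :: ennreal"
  have "(\<integral>\<^sup>+\<omega>. \<Phi> \<omega> * \<Phi> \<omega> \<partial>P) = (\<integral>\<^sup>+u. \<integral>\<^sup>+u'. c u u' \<partial>S \<partial>S)" by (rule E\<Phi>2)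
  also have "\<dots> \<le> (\<integral>\<^sup>+u. \<integral>\<^sup>+u'. ennreal (E1\<^sup>2) + ennreal E2 * Bd R u u' \<partial>S \<partial>S)"
    by (intro nn_integral_mono c_bound)
  also have "\<dots> = (\<integral>\<^sup>+u. ennreal (E1\<^sup>2) * \<sigma> + ennreal E2 * (\<integral>\<^sup>+u'. Bd R u u' \<partial>S) \<partial>S)"
  proof (intro nn_integral_cong)
    fix u
    have "(\<integral>\<^sup>+u'. ennreal (E1\<^sup>2) + ennreal E2 * Bd R u u' \<partial>S)
        = (\<integral>\<^sup>+u'. ennreal (E1\<^sup>2) \<partial>S) + (\<integral>\<^sup>+u'. ennreal E2 * Bd R u u' \<partial>S)"
      using Bd_meas[of R u] by (intro nn_integral_add) auto
    also have "(\<integral>\<^sup>+u'. ennreal E2 * Bd R u u' \<partial>S) = ennreal E2 * (\<integral>\<^sup>+u'. Bd R u u' \<partial>S)"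
      using Bd_meas[of R u] by (rule nn_integral_cmult)
    finally show "(\<integral>\<^sup>+u'. ennreal (E1\<^sup>2) + ennreal E2 * Bd R u u' \<partial>S)
        = ennreal (E1\<^sup>2) * \<sigma> + ennreal E2 * (\<integral>\<^sup>+u'. Bd R u u' \<partial>S)" by simp
  qed
  also have "\<dots> \<le> (\<integral>\<^sup>+u. ennreal (E1\<^sup>2) * \<sigma> + ennreal E2 * (ennreal (sR R) + ennreal (pR R) + ?k u) \<partial>S)"
    using Bd_int by (intro nn_integral_mono add_left_mono mult_left_mono) (auto simp: add_ac)
  also have "\<dots> = ennreal (E1\<^sup>2) * \<sigma> * \<sigma> + ennreal E2 * ((ennreal (sR R) + ennreal (pR R)) * \<sigma> + (\<integral>\<^sup>+u. ?k u \<partial>S))"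
  proof -
    have "(\<integral>\<^sup>+u. ennreal (E1\<^sup>2) * \<sigma> + ennreal E2 * (ennreal (sR R) + ennreal (pR R) + ?k u) \<partial>S)
       = (\<integral>\<^sup>+u. ennreal (E1\<^sup>2) * \<sigma> \<partial>S) + (\<integral>\<^sup>+u. ennreal E2 * (ennreal (sR R) + ennreal (pR R) + ?k u) \<partial>S)"
      using m2[of R] by (intro nn_integral_add) auto
    also have "(\<integral>\<^sup>+u. ennreal E2 * (ennreal (sR R) + ennreal (pR R) + ?k u) \<partial>S)
       = ennreal E2 * (\<integral>\<^sup>+u. (ennreal (sR R) + ennreal (pR R)) + ?k u \<partial>S)"
      using m2[of R] by (intro nn_integral_cmult) auto
    also have "(\<integral>\<^sup>+u. (ennreal (sR R) + ennreal (pR R)) + ?k u \<partial>S)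
       = (\<integral>\<^sup>+u. (ennreal (sR R) + ennreal (pR R)) \<partial>S) + (\<integral>\<^sup>+u. ?k u \<partial>S)"
      using m2[of R] by (intro nn_integral_add) auto
    finally show ?thesis by simp
  qed
  also have "\<dots> \<le> ennreal (E1\<^sup>2) * \<sigma> * \<sigma> + ennreal E2 * ((ennreal (sR R) + ennreal (pR R)) * 1 + ennreal (pR R))"
    using piece2[of R] \<sigma>_le by (intro add_left_mono mult_left_mono add_mono) auto
  also have "\<dots> = ennreal (E1\<^sup>2) * \<sigma> * \<sigma> + ennreal E2 * ennreal (sR R + 2 * pR R)"
  proof -
    have "(ennreal (sR R) + ennreal (pR R)) * 1 + ennreal (pR R) = ennreal (sR R + 2 * pR R)"
      using sR_nonneg[of R] pR_nonneg[of R] by (simp add: ennreal_plus[symmetric] del: ennreal_plus)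
    then show ?thesis by simp
  qed
  finally show ?thesis .
qed


lemma space_\<alpha>: "space \<alpha> = UNIV"
  using sets_eq_imp_space_eq[OF \<alpha>s] by simp

lemma Ft_meas: "F_t M H \<beta> \<alpha> \<in> borel_measurable P"
proof -
  have g: "(\<lambda>x. exp (\<beta> * Hp (fst (fst x), snd (fst x), snd x))) \<in> borel_measurable ((P \<Otimes>\<^sub>M \<alpha>) \<Otimes>\<^sub>M M)"
    by measurable
  have h: "(\<lambda>y. \<integral>w. exp (\<beta> * Hp (fst y, snd y, w)) \<partial>M) \<in> borel_measurable (P \<Otimes>\<^sub>M \<alpha>)"
    using M.borel_measurable_lebesgue_integral[of "\<lambda>y w. exp (\<beta> * Hp (fst y, snd y, w))" "P \<Otimes>\<^sub>M \<alpha>"] g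
    by (simp add: split_beta')
  have k: "(\<lambda>\<omega>. \<integral>z. \<integral>w. exp (\<beta> * Hp (\<omega>, z, w)) \<partial>M \<partial>\<alpha>) \<in> borel_measurable P"
    using \<alpha>.borel_measurable_lebesgue_integral[of "\<lambda>\<omega> z. \<integral>w. exp (\<beta> * Hp (\<omega>, z, w)) \<partial>M" P] h
    by (simp add: split_beta')
  have e: "F_t M H \<beta> \<alpha> = (\<lambda>\<omega>. \<integral>z. \<integral>w. exp (\<beta> * Hp (\<omega>, z, w)) \<partial>M \<partial>\<alpha>)"
    unfolding F_t_def Hp_def by (simp add: fun_eq_iff)
  show ?thesis unfolding e by (rule k)
qed

lemma Ft_eq:
  assumes \<omega>: "\<omega> \<in> space P" and fin: "\<Phi> \<omega> \<noteq> \<infinity>"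
  shows "F_t M H \<beta> \<alpha> \<omega> = enn2real (\<Phi> \<omega>)"
proof -
  define G where "G z = (\<integral>\<^sup>+w. Y (\<omega>, z, w) \<partial>M)" for z
  have YS: "(\<lambda>u. Y (\<omega>, u)) \<in> borel_measurable S" using measurable_Pair2[OF Y_meas \<omega>] .
  have HS: "(\<lambda>u. Hp (\<omega>, u)) \<in> borel_measurable S" using measurable_Pair2[OF Hp_meas \<omega>] .
  have \<Phi>G: "\<Phi> \<omega> = (\<integral>\<^sup>+z. G z \<partial>\<alpha>)"
    unfolding \<Phi>_def G_def using M.nn_integral_fst[OF YS] by simp
  have Gm: "G \<in> borel_measurable \<alpha>"
    unfolding G_def using M.borel_measurable_nn_integral_fst[OF YS] by simp
  have AEG: "AE z in \<alpha>. G z \<noteq> \<infinity>"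
    using nn_integral_PInf_AE[OF Gm] fin \<Phi>G by simp
  have Hw: "(\<lambda>w. Hp (\<omega>, z, w)) \<in> borel_measurable M" for z
    using measurable_Pair2[OF HS, of z] space_\<alpha> by simp
  have inner: "(\<integral>w. exp (\<beta> * H \<omega> z w) \<partial>M) = enn2real (G z)" for z
  proof -
    have "(\<integral>w. exp (\<beta> * H \<omega> z w) \<partial>M) = (\<integral>w. exp (\<beta> * Hp (\<omega>, z, w)) \<partial>M)"
      unfolding Hp_def by simp
    also have "\<dots> = enn2real (\<integral>\<^sup>+w. ennreal (exp (\<beta> * Hp (\<omega>, z, w))) \<partial>M)"
      using Hw[of z] by (intro integral_eq_nn_integral) auto
    finally show ?thesis unfolding G_def Y_def by simp
  qed
  have "F_t M H \<beta> \<alpha> \<omega> = (\<integral>z. enn2real (G z) \<partial>\<alpha>)"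
    unfolding F_t_def using inner by simp
  also have "\<dots> = enn2real (\<integral>\<^sup>+z. ennreal (enn2real (G z)) \<partial>\<alpha>)"
    using Gm by (intro integral_eq_nn_integral) auto
  also have "(\<integral>\<^sup>+z. ennreal (enn2real (G z)) \<partial>\<alpha>) = (\<integral>\<^sup>+z. G z \<partial>\<alpha>)"
    using AEG by (intro nn_integral_cong_AE) (auto simp: less_top)
  finally show ?thesis using \<Phi>G by simp
qed


lemma var_bound:
  "(\<integral>\<omega>. (F_t M H \<beta> \<alpha> \<omega> - (\<integral>\<omega>'. F_t M H \<beta> \<alpha> \<omega>' \<partial>P))\<^sup>2 \<partial>P) \<le> E2 * (sR R + 2 * pR R)"
proof -
  define sr where "sr = measure S (space S)"
  have \<sigma>r: "\<sigma> = ennreal sr" unfolding sr_def by (simp add: S.emeasure_eq_measure)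
  have sr0: "0 \<le> sr" unfolding sr_def by simp
  have E10: "0 \<le> E1" unfolding E1_def by simp
  define Fr where "Fr \<omega> = enn2real (\<Phi> \<omega>)" for \<omega>
  have Frm[measurable]: "Fr \<in> borel_measurable P" unfolding Fr_def by measurable
  have Fr0: "0 \<le> Fr \<omega>" for \<omega> unfolding Fr_def by simp
  have A: "(\<integral>\<^sup>+\<omega>. \<Phi> \<omega> \<partial>P) = ennreal (E1 * sr)" using E\<Phi> \<sigma>r E10 sr0 by (simp add: ennreal_mult)
  define q2 where "q2 = E1\<^sup>2 * sr * sr + E2 * (sR R + 2 * pR R)"
  have Q2: "(\<integral>\<^sup>+\<omega>. \<Phi> \<omega> * \<Phi> \<omega> \<partial>P) \<le> ennreal q2"
  proof -
    have "(\<integral>\<^sup>+\<omega>. \<Phi> \<omega> * \<Phi> \<omega> \<partial>P) \<le> ennreal (E1\<^sup>2) * \<sigma> * \<sigma> + ennreal E2 * ennreal (sR R + 2 * pR R)"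
      by (rule E\<Phi>2_bound)
    also have "\<dots> = ennreal q2"
    proof -
      have x0: "0 \<le> sR R + 2 * pR R" using sR_nonneg[of R] pR_nonneg[of R] by simp
      have e20: "0 \<le> E2" unfolding E2_def by simp
      have a: "ennreal (E1\<^sup>2 * sr * sr) = ennreal (E1\<^sup>2) * ennreal sr * ennreal sr"
        using sr0 by (simp add: ennreal_mult)
      have b: "ennreal (E2 * (sR R + 2 * pR R)) = ennreal E2 * ennreal (sR R + 2 * pR R)"
        using e20 x0 by (simp add: ennreal_mult)
      have "ennreal q2 = ennreal (E1\<^sup>2 * sr * sr) + ennreal (E2 * (sR R + 2 * pR R))"
        unfolding q2_def using sr0 e20 x0 by (intro ennreal_plus) auto
      then show ?thesis unfolding a b \<sigma>r by simp
    qed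
    finally show ?thesis .
  qed
  have AEfin: "AE \<omega> in P. \<Phi> \<omega> \<noteq> \<infinity>" using nn_integral_PInf_AE[OF \<Phi>_meas] A by simp
  have AEeq: "AE \<omega> in P. F_t M H \<beta> \<alpha> \<omega> = Fr \<omega>" using AEfin unfolding Fr_def
  proof (rule AE_mp)
    show "AE \<omega> in P. \<Phi> \<omega> \<noteq> \<infinity> \<longrightarrow> F_t M H \<beta> \<alpha> \<omega> = enn2real (\<Phi> \<omega>)"
      using Ft_eq by (intro AE_I2 impI) auto
  qed
  have AE\<Phi>: "AE \<omega> in P. ennreal (Fr \<omega>) = \<Phi> \<omega>" using AEfin unfolding Fr_def
    by (auto simp: less_top)
  have nn1: "(\<integral>\<^sup>+\<omega>. ennreal (Fr \<omega>) \<partial>P) = ennreal (E1 * sr)"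
  proof -
    have "(\<integral>\<^sup>+\<omega>. ennreal (Fr \<omega>) \<partial>P) = (\<integral>\<^sup>+\<omega>. \<Phi> \<omega> \<partial>P)" using AE\<Phi> by (rule nn_integral_cong_AE)
    then show ?thesis using A by simp
  qed
  have nn2: "(\<integral>\<^sup>+\<omega>. ennreal ((Fr \<omega>)\<^sup>2) \<partial>P) = (\<integral>\<^sup>+\<omega>. \<Phi> \<omega> * \<Phi> \<omega> \<partial>P)"
  proof (intro nn_integral_cong_AE)
    show "AE \<omega> in P. ennreal ((Fr \<omega>)\<^sup>2) = \<Phi> \<omega> * \<Phi> \<omega>"
      using AE\<Phi>
    proof (rule AE_mp)
      show "AE \<omega> in P. ennreal (Fr \<omega>) = \<Phi> \<omega> \<longrightarrow> ennreal ((Fr \<omega>)\<^sup>2) = \<Phi> \<omega> * \<Phi> \<omega>"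
      proof (intro AE_I2 impI)
        fix \<omega> assume h: "ennreal (Fr \<omega>) = \<Phi> \<omega>"
        have "ennreal ((Fr \<omega>)\<^sup>2) = ennreal (Fr \<omega>) * ennreal (Fr \<omega>)"
          using Fr0[of \<omega>] by (simp add: power2_eq_square ennreal_mult)
        then show "ennreal ((Fr \<omega>)\<^sup>2) = \<Phi> \<omega> * \<Phi> \<omega>" using h by simp
      qed
    qed
  qed
  have i1: "integrable P Fr" using nn1 by (intro integrableI_nonneg) (auto simp: Fr0)
  have "(\<integral>\<^sup>+\<omega>. ennreal ((Fr \<omega>)\<^sup>2) \<partial>P) < \<infinity>"
    unfolding nn2 using Q2 by (rule le_less_trans) simp
  then have i2: "integrable P (\<lambda>\<omega>. (Fr \<omega>)\<^sup>2)"
    by (intro integrableI_nonneg) auto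
  have I1: "(\<integral>\<omega>. Fr \<omega> \<partial>P) = E1 * sr"
    using nn1 E10 sr0 by (subst integral_eq_nn_integral) (auto simp: Fr0)
  have I2: "(\<integral>\<omega>. (Fr \<omega>)\<^sup>2 \<partial>P) \<le> q2"
  proof -
    have "(\<integral>\<omega>. (Fr \<omega>)\<^sup>2 \<partial>P) = enn2real (\<integral>\<^sup>+\<omega>. ennreal ((Fr \<omega>)\<^sup>2) \<partial>P)"
      by (subst integral_eq_nn_integral) auto
    also have "\<dots> \<le> q2" unfolding nn2 using Q2 sr0 sR_nonneg[of R] pR_nonneg[of R]
      by (intro enn2real_leI) (auto simp: q2_def E2_def)
    finally show ?thesis .
  qed
  have IF: "(\<integral>\<omega>'. F_t M H \<beta> \<alpha> \<omega>' \<partial>P) = E1 * sr"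
    using integral_cong_AE[OF Ft_meas Frm AEeq] I1 by simp
  have "(\<integral>\<omega>. (F_t M H \<beta> \<alpha> \<omega> - (\<integral>\<omega>'. F_t M H \<beta> \<alpha> \<omega>' \<partial>P))\<^sup>2 \<partial>P)
      = (\<integral>\<omega>. (Fr \<omega> - E1 * sr)\<^sup>2 \<partial>P)"
    unfolding IF using AEeq Ft_meas by (intro integral_cong_AE) auto
  also have "\<dots> = (\<integral>\<omega>. (Fr \<omega>)\<^sup>2 - 2 * (E1 * sr) * Fr \<omega> + (E1 * sr)\<^sup>2 \<partial>P)"
    by (intro Bochner_Integration.integral_cong refl) (simp add: power2_diff algebra_simps)
  also have "\<dots> = (\<integral>\<omega>. (Fr \<omega>)\<^sup>2 \<partial>P) - 2 * (E1 * sr) * (\<integral>\<omega>. Fr \<omega> \<partial>P) + (E1 * sr)\<^sup>2"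
    using i1 i2 by (simp add: P.prob_space)
  also have "\<dots> \<le> q2 - (E1 * sr)\<^sup>2" using I1 I2 by (simp add: power2_eq_square)
  also have "\<dots> = E2 * (sR R + 2 * pR R)" unfolding q2_def by (simp add: power2_eq_square)
  finally show ?thesis .
qed


lemma var_bound':
  "(\<integral>\<omega>. (F_t M H \<beta> \<alpha> \<omega> - (\<integral>\<omega>'. F_t M H \<beta> \<alpha> \<omega>' \<partial>P))\<^sup>2 \<partial>P)
    \<le> exp (2 * \<beta>\<^sup>2 * (t * (\<integral>y. (\<phi> y)\<^sup>2 \<partial>lborel))) *
       ((SUP x. measure \<alpha> (ball x (1 + 2 * real R))) + 2 * measure M (space M - good M W t R))"
  using var_bound[of R] unfolding E2_def K_def Q_def sR_def pR_def .

end

theorem main: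
  fixes t \<beta> :: real
    and \<phi> :: "'d::euclidean_space \<Rightarrow> real"
    and M :: "'w measure" and W :: "'w \<Rightarrow> real \<Rightarrow> 'd"
    and P :: "'e measure" and B :: "(real \<times> 'd \<Rightarrow> real) \<Rightarrow> 'e \<Rightarrow> real"
    and H :: "'e \<Rightarrow> 'd \<Rightarrow> 'w \<Rightarrow> real"
    and \<beta>s :: "nat \<Rightarrow> 'd measure"
  assumes "t > 0" and "\<beta> > 0"
    and "mollifier \<phi>"
    and "brownian_motion M W"
    and "white_noise P B"
    and "H_version P B M W \<phi> t H"
    and "\<And>n. subprob_on (\<beta>s n)"
    and "totally_disintegrates \<beta>s"
  shows "(\<lambda>n. \<integral>\<omega>. (F_t M H \<beta> (\<beta>s n) \<omega> - (\<integral>\<omega>'. F_t M H \<beta> (\<beta>s n) \<omega>' \<partial>P))\<^sup>2 \<partial>P)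
           \<longlonglongrightarrow> 0"
proof -
  have Pp: "prob_space P" using assms(5) unfolding white_noise_def by (rule conjunct1)
  have bm: "prob_space M \<and> (\<forall>s. (\<lambda>w. W w s) \<in> borel_measurable M) \<and> (\<forall>w. W w 0 = 0 \<and> continuous_on {0..} (W w))"
    using assms(4) unfolding brownian_motion_def by blast
  have Mp: "prob_space M" using bm by blast
  have Wm: "\<And>s. (\<lambda>w. W w s) \<in> borel_measurable M" using bm by blast
  have Wc: "\<And>w. continuous_on {0..} (W w)" using bm by blast
  have Hm0: "(\<lambda>(\<omega>, z, w). H \<omega> z w) \<in> borel_measurable (P \<Otimes>\<^sub>M (borel \<Otimes>\<^sub>M M))"
    using assms(6) unfolding H_version_def by (rule conjunct1)
  have Hv: "\<And>z w. AE \<omega> in P. H \<omega> z w = B (H_integrand \<phi> t (\<lambda>s. z + W w s)) \<omega>"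
    using assms(6) unfolding H_version_def by blast
  have st: "setting P M (\<beta>s n) H B W \<phi> t" for n
    unfolding setting_def
    using Pp Mp Hm0 Hv assms(5,3) Wc Wm assms(1) assms(7)[of n] unfolding subprob_on_def by auto
  define C where "C = exp (2 * \<beta>\<^sup>2 * (t * (\<integral>y. (\<phi> y)\<^sup>2 \<partial>lborel)))"
  have C0: "0 < C" unfolding C_def by simp
  define V where "V n = (\<integral>\<omega>. (F_t M H \<beta> (\<beta>s n) \<omega> - (\<integral>\<omega>'. F_t M H \<beta> (\<beta>s n) \<omega>' \<partial>P))\<^sup>2 \<partial>P)" for n
  have V0: "0 \<le> V n" for n unfolding V_def by simp
  have Vb: "V n \<le> C * ((SUP x. measure (\<beta>s n) (ball x (1 + 2 * real R))) + 2 * measure M (space M - good M W t R))" for n R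
    unfolding V_def C_def by (rule setting.var_bound'[OF st])
  have "V \<longlonglongrightarrow> 0"
  proof (rule LIMSEQ_I)
    fix e :: real assume e: "0 < e"
    have "(\<lambda>R. measure M (space M - good M W t R)) \<longlonglongrightarrow> 0" by (rule bad_lim[OF Mp Wm Wc])
    from LIMSEQ_D[OF this, of "e / (4 * C)"] e C0 obtain R where
      R: "norm (measure M (space M - good M W t R) - 0) < e / (4 * C)" by auto
    have "(\<lambda>n. SUP x. measure (\<beta>s n) (ball x (1 + 2 * real R))) \<longlonglongrightarrow> 0"
      using assms(8) unfolding totally_disintegrates_def by simp
    from LIMSEQ_D[OF this, of "e / (2 * C)"] e C0 obtain N where
      N: "\<And>n. n \<ge> N \<Longrightarrow> norm ((SUP x. measure (\<beta>s n) (ball x (1 + 2 * real R))) - 0) < e / (2 * C)" by auto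
    show "\<exists>no. \<forall>n\<ge>no. norm (V n - 0) < e"
    proof (intro exI allI impI)
      fix n assume n: "N \<le> n"
      have a: "(SUP x. measure (\<beta>s n) (ball x (1 + 2 * real R))) < e / (2 * C)" using N[OF n] by simp
      have b: "measure M (space M - good M W t R) < e / (4 * C)" using R by simp
      have "(SUP x. measure (\<beta>s n) (ball x (1 + 2 * real R))) + 2 * measure M (space M - good M W t R) < e / C"
        using a b C0 by (simp add: field_simps)
      then have "C * ((SUP x. measure (\<beta>s n) (ball x (1 + 2 * real R))) + 2 * measure M (space M - good M W t R)) < e"
        using C0 by (simp add: field_simps)
      then show "norm (V n - 0) < e" using Vb[of n R] V0[of n] by simp
    qed
  qed
  then show ?thesis unfolding V_def .
qed


theorem proposition3p6:
  fixes t \<beta> :: real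
    and \<phi> :: "'d::euclidean_space \<Rightarrow> real"
    and M :: "'w measure" and W :: "'w \<Rightarrow> real \<Rightarrow> 'd"
    and P :: "'e measure" and B :: "(real \<times> 'd \<Rightarrow> real) \<Rightarrow> 'e \<Rightarrow> real"
    and H :: "'e \<Rightarrow> 'd \<Rightarrow> 'w \<Rightarrow> real"
    and \<beta>s :: "nat \<Rightarrow> 'd measure"
  assumes "t > 0" and "\<beta> > 0"
    and "mollifier \<phi>"
    and "brownian_motion M W"
    and "white_noise P B"
    and "H_version P B M W \<phi> t H"
    and "\<And>n. subprob_on (\<beta>s n)"
    and "totally_disintegrates \<beta>s"
  shows "(\<lambda>n. \<integral>\<omega>. (F_t M H \<beta> (\<beta>s n) \<omega> - (\<integral>\<omega>'. F_t M H \<beta> (\<beta>s n) \<omega>' \<partial>P))\<^sup>2 \<partial>P)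
           \<longlonglongrightarrow> 0"
  using assms by (rule main)

end
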